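(* Let $k\ge1$, $d>0$, and let $\gamma_1>0$, $\gamma_2,\ldots,\gamma_k\ge 0$. Let $x_1,\ldots,x_k$ be i.i.d. real standard Gaussian random variables, put $a_i=\sqrt{\gamma_i}$, $\gamma_{[l]}=\sum_{i=1}^l\gamma_i$ and $v_{[l]}=\frac{1}{\sqrt{\gamma_{[l]}}}\sum_{i=1}^l a_i x_i$ for $l=1,\ldots,k$. Define $P_k(d)=\Pr\{\tfrac12\sqrt{\gamma_{[k]}}\,d<v_{[k]}\}$ and $P_{1:k}(d)=\Pr\{\tfrac12\sqrt{\gamma_{[l]}}\,d<v_{[l]}\ \text{for all } l=1,\ldots,k\}$. Then $$\frac{1}{2^{k-1}}P_k(d)\le P_{1:k}(d)\le P_k(d).$$
   Context: Here $P_k(d)$ is the pairwise error probability after $k$ rounds of Chase-combining HARQ for two codewords at Euclidean distance $d$, and $P_{1:k}(d)$ the probability that the same pairwise error occurs in all rounds $1,\ldots,k$; $\gamma_l$ is the SNR of round $l$ and $v_{[l]}$ is the (unit-variance Gaussian) projected effective noise after maximum-ratio combining of the first $l$ rounds. *)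

theory Defs
  imports "HOL-Probability.Probability"
begin

definition gamma_acc :: "(nat \<Rightarrow> real) \<Rightarrow> nat \<Rightarrow> real" where
  "gamma_acc \<gamma> l = (\<Sum>i=1..l. \<gamma> i)"

definition v_noise :: "(nat \<Rightarrow> real) \<Rightarrow> (nat \<Rightarrow> 'a \<Rightarrow> real) \<Rightarrow> nat \<Rightarrow> 'a \<Rightarrow> real" where
  "v_noise \<gamma> X l \<omega> = (1 / sqrt (gamma_acc \<gamma> l)) * (\<Sum>i=1..l. sqrt (\<gamma> i) * X i \<omega>)"

definition P_k :: "'a measure \<Rightarrow> (nat \<Rightarrow> real) \<Rightarrow> (nat \<Rightarrow> 'a \<Rightarrow> real) \<Rightarrow> nat \<Rightarrow> real \<Rightarrow> real" where
  "P_k M \<gamma> X k d = measure M {\<omega> \<in> space M. 1/2 * sqrt (gamma_acc \<gamma> k) * d < v_noise \<gamma> X k \<omega>}"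

definition P_1k :: "'a measure \<Rightarrow> (nat \<Rightarrow> real) \<Rightarrow> (nat \<Rightarrow> 'a \<Rightarrow> real) \<Rightarrow> nat \<Rightarrow> real \<Rightarrow> real" where
  "P_1k M \<gamma> X k d = measure M {\<omega> \<in> space M. \<forall>l\<in>{1..k}. 1/2 * sqrt (gamma_acc \<gamma> l) * d < v_noise \<gamma> X l \<omega>}"

end

theory Submission
  imports Defs
begin

lemma nn_shx:
  fixes f :: "real \<times> real \<Rightarrow> ennreal"
  assumes f[measurable]: "f \<in> borel_measurable (lborel \<Otimes>\<^sub>M lborel)"
  shows "(\<integral>\<^sup>+z. f (fst z + t * snd z, snd z) \<partial>(lborel \<Otimes>\<^sub>M lborel)) = (\<integral>\<^sup>+z. f z \<partial>(lborel \<Otimes>\<^sub>M lborel))"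
proof -
  have P: "pair_sigma_finite lborel lborel" by standard
  have "(\<integral>\<^sup>+z. f z \<partial>(lborel \<Otimes>\<^sub>M lborel)) = (\<integral>\<^sup>+y. \<integral>\<^sup>+x. f (x,y) \<partial>lborel \<partial>lborel)"
    by (rule pair_sigma_finite.nn_integral_snd[OF P, symmetric]) simp
  also have "\<dots> = (\<integral>\<^sup>+y. \<integral>\<^sup>+x. f (x + t*y,y) \<partial>lborel \<partial>lborel)"
  proof (rule nn_integral_cong)
    fix y :: real
    show "(\<integral>\<^sup>+x. f (x,y) \<partial>lborel) = (\<integral>\<^sup>+x. f (x + t*y,y) \<partial>lborel)"
      using nn_integral_real_affine[of "\<lambda>x. f(x,y)" 1 "t*y"] by (simp add: add.commute)
  qed
  also have "\<dots> = (\<integral>\<^sup>+z. f (fst z + t * snd z, snd z) \<partial>(lborel \<Otimes>\<^sub>M lborel))"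
    by (rule pair_sigma_finite.nn_integral_snd[OF P, of "\<lambda>z. f (fst z + t * snd z, snd z)", simplified])
  finally show ?thesis ..
qed

lemma nn_shy:
  fixes f :: "real \<times> real \<Rightarrow> ennreal"
  assumes f[measurable]: "f \<in> borel_measurable (lborel \<Otimes>\<^sub>M lborel)"
  shows "(\<integral>\<^sup>+z. f (fst z, snd z + t * fst z) \<partial>(lborel \<Otimes>\<^sub>M lborel)) = (\<integral>\<^sup>+z. f z \<partial>(lborel \<Otimes>\<^sub>M lborel))"
proof -
  have P: "pair_sigma_finite lborel lborel" by standard
  have "(\<integral>\<^sup>+z. f z \<partial>(lborel \<Otimes>\<^sub>M lborel)) = (\<integral>\<^sup>+x. \<integral>\<^sup>+y. f (x,y) \<partial>lborel \<partial>lborel)"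
    by (rule lborel.nn_integral_fst[symmetric]) simp
  also have "\<dots> = (\<integral>\<^sup>+x. \<integral>\<^sup>+y. f (x, y + t*x) \<partial>lborel \<partial>lborel)"
  proof (rule nn_integral_cong)
    fix x :: real
    show "(\<integral>\<^sup>+y. f (x,y) \<partial>lborel) = (\<integral>\<^sup>+y. f (x, y + t*x) \<partial>lborel)"
      using nn_integral_real_affine[of "\<lambda>y. f(x,y)" 1 "t*x"] by (simp add: add.commute)
  qed
  also have "\<dots> = (\<integral>\<^sup>+z. f (fst z, snd z + t * fst z) \<partial>(lborel \<Otimes>\<^sub>M lborel))"
    by (rule lborel.nn_integral_fst[of "\<lambda>z. f (fst z, snd z + t * fst z)", simplified]) simp
  finally show ?thesis ..
qed

lemma nn_flip:
  fixes f :: "real \<times> real \<Rightarrow> ennreal"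
  assumes f[measurable]: "f \<in> borel_measurable (lborel \<Otimes>\<^sub>M lborel)"
  shows "(\<integral>\<^sup>+z. f (fst z, - snd z) \<partial>(lborel \<Otimes>\<^sub>M lborel)) = (\<integral>\<^sup>+z. f z \<partial>(lborel \<Otimes>\<^sub>M lborel))"
proof -
  have "(\<integral>\<^sup>+z. f z \<partial>(lborel \<Otimes>\<^sub>M lborel)) = (\<integral>\<^sup>+x. \<integral>\<^sup>+y. f (x,y) \<partial>lborel \<partial>lborel)"
    by (rule lborel.nn_integral_fst[symmetric]) simp
  also have "\<dots> = (\<integral>\<^sup>+x. \<integral>\<^sup>+y. f (x, - y) \<partial>lborel \<partial>lborel)"
  proof (rule nn_integral_cong)
    fix x :: real
    show "(\<integral>\<^sup>+y. f (x,y) \<partial>lborel) = (\<integral>\<^sup>+y. f (x, - y) \<partial>lborel)"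
      using nn_integral_real_affine[of "\<lambda>y. f(x,y)" "-1" 0] by simp
  qed
  also have "\<dots> = (\<integral>\<^sup>+z. f (fst z, - snd z) \<partial>(lborel \<Otimes>\<^sub>M lborel))"
    by (rule lborel.nn_integral_fst[of "\<lambda>z. f (fst z, - snd z)", simplified]) simp
  finally show ?thesis ..
qed

definition Rf :: "real \<Rightarrow> real \<Rightarrow> real \<times> real \<Rightarrow> real \<times> real" where
  "Rf p q z = ((p\<^sup>2 - q\<^sup>2) * fst z + 2*p*q * snd z, 2*p*q * fst z + (q\<^sup>2 - p\<^sup>2) * snd z)"

lemma Rf_measurable[measurable]: "Rf p q \<in> measurable (lborel \<Otimes>\<^sub>M lborel) (lborel \<Otimes>\<^sub>M lborel)"
  unfolding Rf_def by measurable

lemma nn_Rf: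
  fixes f :: "real \<times> real \<Rightarrow> ennreal"
  assumes f[measurable]: "f \<in> borel_measurable (lborel \<Otimes>\<^sub>M lborel)"
    and p: "p \<noteq> 0" and pq: "p\<^sup>2 + q\<^sup>2 = 1"
  shows "(\<integral>\<^sup>+z. f (Rf p q z) \<partial>(lborel \<Otimes>\<^sub>M lborel)) = (\<integral>\<^sup>+z. f z \<partial>(lborel \<Otimes>\<^sub>M lborel))"
proof -
  define t where "t = - q / p"
  define s where "s = 2*p*q"
  define Sx where "Sx = (\<lambda>z::real\<times>real. (fst z + t * snd z, snd z))"
  define Sy where "Sy = (\<lambda>z::real\<times>real. (fst z, snd z + s * fst z))"
  have [measurable]: "Sx \<in> measurable (lborel \<Otimes>\<^sub>M lborel) (lborel \<Otimes>\<^sub>M lborel)"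
    "Sy \<in> measurable (lborel \<Otimes>\<^sub>M lborel) (lborel \<Otimes>\<^sub>M lborel)"
    unfolding Sx_def Sy_def by measurable
  have eq: "Rf p q z = Sx (Sy (Sx (fst z, - snd z)))" for z
  proof -
    have "fst (Rf p q z) = fst (Sx (Sy (Sx (fst z, - snd z))))"
      unfolding Rf_def Sx_def Sy_def t_def s_def using p pq
      by (simp add: field_simps power2_eq_square) algebra
    moreover have "snd (Rf p q z) = snd (Sx (Sy (Sx (fst z, - snd z))))"
      unfolding Rf_def Sx_def Sy_def t_def s_def using p pq
      by (simp add: field_simps power2_eq_square) algebra
    ultimately show ?thesis by (simp add: prod_eq_iff)
  qed
  have "(\<integral>\<^sup>+z. f (Rf p q z) \<partial>(lborel \<Otimes>\<^sub>M lborel)) =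
        (\<integral>\<^sup>+z. (\<lambda>w. f (Sx (Sy (Sx w)))) (fst z, - snd z) \<partial>(lborel \<Otimes>\<^sub>M lborel))"
    by (simp add: eq)
  also have "\<dots> = (\<integral>\<^sup>+z. f (Sx (Sy (Sx z))) \<partial>(lborel \<Otimes>\<^sub>M lborel))"
    by (rule nn_flip) measurable
  also have "\<dots> = (\<integral>\<^sup>+z. (\<lambda>w. f (Sx (Sy w))) (fst z + t * snd z, snd z) \<partial>(lborel \<Otimes>\<^sub>M lborel))"
    by (simp add: Sx_def)
  also have "\<dots> = (\<integral>\<^sup>+z. f (Sx (Sy z)) \<partial>(lborel \<Otimes>\<^sub>M lborel))"
    by (rule nn_shx) measurable
  also have "\<dots> = (\<integral>\<^sup>+z. (\<lambda>w. f (Sx w)) (fst z, snd z + s * fst z) \<partial>(lborel \<Otimes>\<^sub>M lborel))"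
    by (simp add: Sy_def)
  also have "\<dots> = (\<integral>\<^sup>+z. f (Sx z) \<partial>(lborel \<Otimes>\<^sub>M lborel))"
    by (rule nn_shy) measurable
  also have "\<dots> = (\<integral>\<^sup>+z. f (fst z + t * snd z, snd z) \<partial>(lborel \<Otimes>\<^sub>M lborel))"
    by (simp add: Sx_def)
  also have "\<dots> = (\<integral>\<^sup>+z. f z \<partial>(lborel \<Otimes>\<^sub>M lborel))"
    by (rule nn_shx) measurable
  finally show ?thesis .
qed

abbreviation NN :: "real measure" where "NN \<equiv> density lborel (\<lambda>x. ennreal (std_normal_density x))"

lemma prob_NN: "prob_space NN"
  using prob_space_normal_density[of 1 0] by simp

lemma phi_prod: "std_normal_density a * std_normal_density b = exp (- (a\<^sup>2 + b\<^sup>2) / 2) / (2*pi)"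
  by (simp add: std_normal_density_def normal_density_def exp_add[symmetric] field_simps real_sqrt_mult[symmetric])

lemma Rf_norm: "p\<^sup>2 + q\<^sup>2 = 1 \<Longrightarrow> (fst (Rf p q z))\<^sup>2 + (snd (Rf p q z))\<^sup>2 = (fst z)\<^sup>2 + (snd z)\<^sup>2"
  unfolding Rf_def by (simp add: power2_eq_square) algebra

lemma NN_pair: "NN \<Otimes>\<^sub>M NN = density (lborel \<Otimes>\<^sub>M lborel) (\<lambda>z. ennreal (std_normal_density (fst z) * std_normal_density (snd z)))"
proof -
  have "NN \<Otimes>\<^sub>M NN = density (lborel \<Otimes>\<^sub>M lborel) (\<lambda>(x,y). ennreal (std_normal_density x) * ennreal (std_normal_density y))"
    apply (rule pair_measure_density)
    apply simp_all
    apply (rule lborel.sigma_finite_measure_axioms)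
    using prob_NN prob_space_imp_sigma_finite by blast
  also have "\<dots> = density (lborel \<Otimes>\<^sub>M lborel) (\<lambda>z. ennreal (std_normal_density (fst z) * std_normal_density (snd z)))"
    by (rule density_cong) (auto simp: ennreal_mult)
  finally show ?thesis .
qed

lemma NN_Rf:
  assumes p: "p \<noteq> 0" and pq: "p\<^sup>2 + q\<^sup>2 = 1"
  shows "distr (NN \<Otimes>\<^sub>M NN) (lborel \<Otimes>\<^sub>M lborel) (Rf p q) = NN \<Otimes>\<^sub>M NN"
proof -
  define g where "g = (\<lambda>z. ennreal (std_normal_density (fst z) * std_normal_density (snd z)))"
  have g[measurable]: "g \<in> borel_measurable (lborel \<Otimes>\<^sub>M lborel)" unfolding g_def by measurable
  have gR: "g (Rf p q z) = g z" for z
    unfolding g_def phi_prod Rf_norm[OF pq] ..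
  show ?thesis unfolding NN_pair g_def[symmetric]
  proof (rule measure_eqI)
    show "sets (distr (density (lborel \<Otimes>\<^sub>M lborel) g) (lborel \<Otimes>\<^sub>M lborel) (Rf p q)) = sets (density (lborel \<Otimes>\<^sub>M lborel) g)"
      by simp
    fix A assume "A \<in> sets (distr (density (lborel \<Otimes>\<^sub>M lborel) g) (lborel \<Otimes>\<^sub>M lborel) (Rf p q))"
    then have A[measurable]: "A \<in> sets (lborel \<Otimes>\<^sub>M lborel)" by simp
    have "emeasure (distr (density (lborel \<Otimes>\<^sub>M lborel) g) (lborel \<Otimes>\<^sub>M lborel) (Rf p q)) A
        = emeasure (density (lborel \<Otimes>\<^sub>M lborel) g) (Rf p q -` A \<inter> space (lborel \<Otimes>\<^sub>M lborel))"
      using A by (subst emeasure_distr) simp_all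
    also have "\<dots> = (\<integral>\<^sup>+z. g z * indicator (Rf p q -` A \<inter> space (lborel \<Otimes>\<^sub>M lborel)) z \<partial>(lborel \<Otimes>\<^sub>M lborel))"
      by (rule emeasure_density) measurable
    also have "\<dots> = (\<integral>\<^sup>+z. (\<lambda>w. g w * indicator A w) (Rf p q z) \<partial>(lborel \<Otimes>\<^sub>M lborel))"
      by (rule nn_integral_cong) (simp add: gR indicator_def space_pair_measure)
    also have "\<dots> = (\<integral>\<^sup>+z. g z * indicator A z \<partial>(lborel \<Otimes>\<^sub>M lborel))"
      by (rule nn_Rf[OF _ p pq]) measurable
    also have "\<dots> = emeasure (density (lborel \<Otimes>\<^sub>M lborel) g) A"
      by (rule emeasure_density[symmetric]) measurable
    finally show "emeasure (distr (density (lborel \<Otimes>\<^sub>M lborel) g) (lborel \<Otimes>\<^sub>M lborel) (Rf p q)) A = emeasure (density (lborel \<Otimes>\<^sub>M lborel) g) A" .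
  qed
qed

lemma Rf_fst_snd:
  assumes pq: "p\<^sup>2 + q\<^sup>2 = 1"
  shows "q * fst (Rf p q w) - p * snd (Rf p q w) = - (q * fst w - p * snd w)"
    and "p * fst (Rf p q w) + q * snd (Rf p q w) = p * fst w + q * snd w"
  using pq unfolding Rf_def by (simp_all add: power2_eq_square) algebra+

lemma Rf_le_iff:
  assumes pq: "p\<^sup>2 + q\<^sup>2 = 1"
  shows "p * snd (Rf p q w) \<le> q * fst (Rf p q w) \<longleftrightarrow> q * fst w \<le> p * snd w"
  using Rf_fst_snd(1)[OF pq, of w] by linarith

lemma (in prob_space) reflect_half:
  fixes W V :: "'a \<Rightarrow> real" and Y Z :: "'a \<Rightarrow> 'b"
  assumes fW[measurable]: "fW \<in> borel_measurable MY" and fV[measurable]: "fV \<in> borel_measurable MY"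
    and Wdef: "W = (\<lambda>\<omega>. fW (Y \<omega>))" and Vdef: "V = (\<lambda>\<omega>. fV (Y \<omega>))"
    and dW: "distributed M lborel W (\<lambda>x. ennreal (std_normal_density x))"
    and dV: "distributed M lborel V (\<lambda>x. ennreal (std_normal_density x))"
    and iWV: "indep_var lborel W lborel V"
    and iZ: "indep_var MY Y MZ Z"
    and p: "p \<noteq> 0" and pq: "p\<^sup>2 + q\<^sup>2 = 1"
    and Gs[measurable]: "Gs \<in> sets (lborel \<Otimes>\<^sub>M MZ)"
  shows "1/2 * prob {\<omega>\<in>space M. (p * W \<omega> + q * V \<omega>, Z \<omega>) \<in> Gs}
    \<le> prob {\<omega>\<in>space M. q * W \<omega> - p * V \<omega> \<ge> 0 \<and> (p * W \<omega> + q * V \<omega>, Z \<omega>) \<in> Gs}"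
proof -
  let ?L2 = "lborel \<Otimes>\<^sub>M lborel :: (real \<times> real) measure"
  let ?S = "?L2 \<Otimes>\<^sub>M MZ"
  define J where "J = distr M ?S (\<lambda>\<omega>. ((W \<omega>, V \<omega>), Z \<omega>))"
  define LZ where "LZ = distr M MZ Z"
  have rvW[measurable]: "W \<in> measurable M lborel" using dW by (simp add: distributed_def)
  have rvV[measurable]: "V \<in> measurable M lborel" using dV by (simp add: distributed_def)
  have rvZ[measurable]: "Z \<in> measurable M MZ" using iZ indep_var_rv2 by blast
  have rvY[measurable]: "Y \<in> measurable M MY" using iZ indep_var_rv1 by blast
  have dW': "distr M lborel W = NN" using dW by (simp add: distributed_def)
  have dV': "distr M lborel V = NN" using dV by (simp add: distributed_def)
  have J: "J = (NN \<Otimes>\<^sub>M NN) \<Otimes>\<^sub>M LZ"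
  proof -
    have "distr M lborel W \<Otimes>\<^sub>M distr M lborel V = distr M ?L2 (\<lambda>x. (W x, V x))"
      using iWV indep_var_distribution_eq by blast
    moreover have "distr M ?L2 (\<lambda>x. (W x, V x)) \<Otimes>\<^sub>M distr M MZ Z = J"
    proof -
      have YZ: "distr M MY Y \<Otimes>\<^sub>M distr M MZ Z = distr M (MY \<Otimes>\<^sub>M MZ) (\<lambda>x. (Y x, Z x))"
        using iZ indep_var_distribution_eq by blast
      have s1: "distr M ?L2 (\<lambda>x. (W x, V x)) = distr (distr M MY Y) ?L2 (\<lambda>a. (fW a, fV a))"
        unfolding Wdef Vdef by (subst distr_distr) (simp_all add: comp_def)
      have s2: "distr M MZ Z = distr (distr M MZ Z) MZ (\<lambda>x. x)"
        by (rule distr_id2[symmetric]) simp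
      have "distr (distr M MY Y) ?L2 (\<lambda>a. (fW a, fV a)) \<Otimes>\<^sub>M distr (distr M MZ Z) MZ (\<lambda>x. x)
          = distr (distr M MY Y \<Otimes>\<^sub>M distr M MZ Z) ?S (\<lambda>(a, z). ((fW a, fV a), z))"
      proof (rule pair_measure_distr)
        show "(\<lambda>a. (fW a, fV a)) \<in> measurable (distr M MY Y) ?L2" by simp
        show "(\<lambda>x. x) \<in> measurable (distr M MZ Z) MZ" by simp
        have "prob_space (distr (distr M MZ Z) MZ (\<lambda>x. x))"
          by (intro prob_space.prob_space_distr prob_space_distr) simp_all
        then show "sigma_finite_measure (distr (distr M MZ Z) MZ (\<lambda>x. x))"
          using prob_space_imp_sigma_finite by blast
      qed
      also have "\<dots> = J"
        unfolding YZ J_def Wdef Vdef by (subst distr_distr) (simp_all add: comp_def)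
      finally show ?thesis using s1 s2 by simp
    qed
    ultimately show ?thesis using dW' dV' unfolding LZ_def by simp
  qed
  have probLZ: "prob_space LZ" unfolding LZ_def by (rule prob_space_distr) simp
  have probJ: "prob_space J" unfolding J_def by (rule prob_space_distr) simp
  have sJ: "sets J = sets ?S" unfolding J_def by simp
  have spJ: "space J = space ?S" unfolding J_def by simp
  define T where "T = (\<lambda>(x::real\<times>real, y::'b). (Rf p q x, y))"
  have T[measurable]: "T \<in> measurable ?S ?S" unfolding T_def by measurable
  have Jinv: "distr J ?S T = J"
  proof -
    have "distr (NN \<Otimes>\<^sub>M NN) ?L2 (Rf p q) \<Otimes>\<^sub>M distr LZ MZ (\<lambda>x. x)
        = distr ((NN \<Otimes>\<^sub>M NN) \<Otimes>\<^sub>M LZ) ?S (\<lambda>(x, y). (Rf p q x, y))"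
    proof (rule pair_measure_distr)
      show "Rf p q \<in> measurable (NN \<Otimes>\<^sub>M NN) ?L2"
      proof -
        have ss: "sets (NN \<Otimes>\<^sub>M NN) = sets ?L2" by (intro sets_pair_measure_cong) simp_all
        show ?thesis using measurable_cong_sets[OF ss refl, of "lborel \<Otimes>\<^sub>M lborel"] Rf_measurable by simp
      qed
      show "(\<lambda>x. x) \<in> measurable LZ MZ" unfolding LZ_def by simp
      have "distr LZ MZ (\<lambda>x. x) = LZ" by (rule distr_id2) (simp add: LZ_def)
      then show "sigma_finite_measure (distr LZ MZ (\<lambda>x. x))"
        using probLZ prob_space_imp_sigma_finite by simp
    qed
    moreover have "distr LZ MZ (\<lambda>x. x) = LZ" by (rule distr_id2) (simp add: LZ_def)
    ultimately show ?thesis using NN_Rf[OF p pq] J unfolding T_def by simp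
  qed
  define Ap where "Ap = {u \<in> space ?S. q * fst (fst u) - p * snd (fst u) \<ge> 0 \<and> (p * fst (fst u) + q * snd (fst u), snd u) \<in> Gs}"
  define Am where "Am = {u \<in> space ?S. q * fst (fst u) - p * snd (fst u) \<le> 0 \<and> (p * fst (fst u) + q * snd (fst u), snd u) \<in> Gs}"
  define AG where "AG = {u \<in> space ?S. (p * fst (fst u) + q * snd (fst u), snd u) \<in> Gs}"
  define h where "h = (\<lambda>u::(real\<times>real)\<times>'b. (p * fst (fst u) + q * snd (fst u), snd u))"
  have h: "h \<in> measurable ?S (lborel \<Otimes>\<^sub>M MZ)" unfolding h_def by measurable
  have hG: "h -` Gs \<inter> space ?S \<in> sets ?S" by (rule measurable_sets[OF h Gs])
  have c1: "{u \<in> space ?S. q * fst (fst u) - p * snd (fst u) \<ge> 0} \<in> sets ?S" by measurable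
  have c2: "{u \<in> space ?S. q * fst (fst u) - p * snd (fst u) \<le> 0} \<in> sets ?S" by measurable
  have "Ap = (h -` Gs \<inter> space ?S) \<inter> {u \<in> space ?S. q * fst (fst u) - p * snd (fst u) \<ge> 0}"
    "Am = (h -` Gs \<inter> space ?S) \<inter> {u \<in> space ?S. q * fst (fst u) - p * snd (fst u) \<le> 0}"
    "AG = h -` Gs \<inter> space ?S"
    unfolding Ap_def Am_def AG_def h_def by auto
  then have mA[measurable]: "Ap \<in> sets ?S" "Am \<in> sets ?S" "AG \<in> sets ?S"
    using hG c1 c2 by auto
  have e1: "prob {\<omega>\<in>space M. q * W \<omega> - p * V \<omega> \<ge> 0 \<and> (p * W \<omega> + q * V \<omega>, Z \<omega>) \<in> Gs} = measure J Ap"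
    unfolding J_def
    by (subst measure_distr[OF _ mA(1)]) (auto simp: Ap_def space_pair_measure intro!: arg_cong[where f=prob] measurable_space[OF rvZ])
  have e2: "prob {\<omega>\<in>space M. (p * W \<omega> + q * V \<omega>, Z \<omega>) \<in> Gs} = measure J AG"
    unfolding J_def
    by (subst measure_distr[OF _ mA(3)]) (auto simp: AG_def space_pair_measure intro!: arg_cong[where f=prob] measurable_space[OF rvZ])
  have e3: "measure J Ap = measure J Am"
  proof -
    have "measure J Ap = measure (distr J ?S T) Ap" using Jinv by simp
    also have "\<dots> = measure J (T -` Ap \<inter> space J)"
      by (rule measure_distr[OF _ mA(1)]) (simp add: measurable_cong_sets[OF sJ refl])
    also have "T -` Ap \<inter> space J = Am"
      unfolding spJ Ap_def Am_def T_def
      by (auto simp: space_pair_measure Rf_fst_snd[OF pq] Rf_le_iff[OF pq])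
    finally show ?thesis .
  qed
  interpret PJ: prob_space J by (rule probJ)
  have "measure J AG \<le> measure J (Ap \<union> Am)"
  proof (rule PJ.finite_measure_mono)
    show "AG \<subseteq> Ap \<union> Am" unfolding AG_def Ap_def Am_def by auto
    show "Ap \<union> Am \<in> sets J" using mA by (simp add: sJ)
  qed
  also have "\<dots> \<le> measure J Ap + measure J Am"
    by (rule measure_Un_le) (use mA in \<open>simp_all add: sJ PJ.emeasure_finite\<close>)
  finally show ?thesis using e1 e2 e3 by simp
qed

lemma gamma_acc_pos:
  assumes "\<gamma> 1 > 0" "\<And>i. i \<in> {2..k} \<Longrightarrow> \<gamma> i \<ge> 0" "1 \<le> l" "l \<le> k"
  shows "gamma_acc \<gamma> l > 0"
proof -
  have "gamma_acc \<gamma> l = \<gamma> 1 + (\<Sum>i=2..l. \<gamma> i)"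
    unfolding gamma_acc_def using assms(3) by (simp add: sum.atLeast_Suc_atMost numeral_2_eq_2)
  moreover have "(\<Sum>i=2..l. \<gamma> i) \<ge> 0" using assms by (intro sum_nonneg) auto
  ultimately show ?thesis using assms(1) by simp
qed

lemma gamma_acc_Suc: "gamma_acc \<gamma> (Suc l) = gamma_acc \<gamma> l + \<gamma> (Suc l)"
  unfolding gamma_acc_def by simp

lemma (in prob_space) W_normal:
  assumes indep: "indep_vars (\<lambda>_. borel) X {1..k}"
    and normal: "\<And>i. i \<in> {1..k} \<Longrightarrow> distributed M lborel (X i) (\<lambda>x. ennreal (std_normal_density x))"
    and j: "1 \<le> j" "j \<le> k" and g1: "\<gamma> 1 > 0" and g2: "\<And>i. i \<in> {2..k} \<Longrightarrow> \<gamma> i \<ge> 0"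
  shows "distributed M lborel (\<lambda>\<omega>. (\<Sum>i=1..j. sqrt (\<gamma> i) * X i \<omega>) / sqrt (gamma_acc \<gamma> j)) (\<lambda>x. ennreal (std_normal_density x))"
proof -
  define I where "I = {i\<in>{1..j}. \<gamma> i > 0}"
  have I: "finite I" "I \<noteq> {}" "I \<subseteq> {1..k}" using j g1 unfolding I_def by auto
  have g0: "\<gamma> i = 0" if "i \<in> {1..j}" "i \<notin> I" for i
    using that g2[of i] j unfolding I_def by (cases "i = 1") (use g1 in auto)
  have sumeq: "(\<Sum>i=1..j. sqrt (\<gamma> i) * X i \<omega>) = (\<Sum>i\<in>I. sqrt (\<gamma> i) * X i \<omega>)" for \<omega>
    by (rule sum.mono_neutral_right) (auto simp: I_def g0)
  have Geq: "gamma_acc \<gamma> j = (\<Sum>i\<in>I. \<gamma> i)"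
    unfolding gamma_acc_def by (rule sum.mono_neutral_right) (auto simp: I_def g0)
  have ind: "indep_vars (\<lambda>_. borel) (\<lambda>i \<omega>. sqrt (\<gamma> i) * X i \<omega>) I"
    by (rule indep_vars_compose2[where X=X]) (use indep_vars_subset[OF indep I(3)] in auto)
  have nd: "distributed M lborel (\<lambda>\<omega>. sqrt (\<gamma> i) * X i \<omega>) (normal_density 0 (sqrt (\<gamma> i)))" if "i \<in> I" for i
  proof -
    have pos: "\<gamma> i > 0" using that I_def by auto
    have "distributed M lborel (\<lambda>x. 0 + sqrt (\<gamma> i) * X i x) (normal_density (0 + sqrt (\<gamma> i) * 0) (\<bar>sqrt (\<gamma> i)\<bar> * 1))"
      by (rule normal_density_affine) (use normal[of i] that I pos in auto)
    then show ?thesis using pos by simp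
  qed
  have "distributed M lborel (\<lambda>\<omega>. \<Sum>i\<in>I. sqrt (\<gamma> i) * X i \<omega>) (normal_density (\<Sum>i\<in>I. 0) (sqrt (\<Sum>i\<in>I. (sqrt (\<gamma> i))\<^sup>2)))"
    by (rule sum_indep_normal[OF I(1,2) ind]) (auto simp: I_def intro: nd)
  moreover have "(\<Sum>i\<in>I. (sqrt (\<gamma> i))\<^sup>2) = gamma_acc \<gamma> j"
    unfolding Geq by (rule sum.cong) (auto simp: I_def)
  ultimately have "distributed M lborel (\<lambda>\<omega>. \<Sum>i\<in>I. sqrt (\<gamma> i) * X i \<omega>) (normal_density 0 (sqrt (gamma_acc \<gamma> j)))"
    by simp
  moreover have "gamma_acc \<gamma> j > 0" using gamma_acc_pos[of \<gamma> k j] g1 g2 j by blast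
  ultimately show ?thesis unfolding sumeq
    using normal_standard_normal_convert[of "sqrt (gamma_acc \<gamma> j)" "\<lambda>\<omega>. \<Sum>i\<in>I. sqrt (\<gamma> i) * X i \<omega>" 0]
    by simp
qed

lemma alg_step:
  fixes p q w v a :: real
  assumes "p > 0" "q \<ge> 0" "p\<^sup>2 + q\<^sup>2 = 1" "q * w - p * v \<ge> 0" "a < p * w + q * v"
  shows "p * a < w"
proof -
  have "p * a < p * (p * w + q * v)" using assms by (intro mult_strict_left_mono) auto
  also have "\<dots> = p\<^sup>2 * w + q * (p * v)" by (simp add: algebra_simps power2_eq_square)
  also have "\<dots> \<le> p\<^sup>2 * w + q * (q * w)" using assms by (intro add_left_mono mult_left_mono) auto
  also have "\<dots> = (p\<^sup>2 + q\<^sup>2) * w" by (simp add: algebra_simps power2_eq_square)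
  also have "\<dots> = w" using assms(3) by simp
  finally show ?thesis .
qed

lemma sum_split_Suc:
  fixes f :: "nat \<Rightarrow> real"
  assumes "Suc j \<le> l"
  shows "(\<Sum>i=1..l. f i) = (\<Sum>i=1..Suc j. f i) + (\<Sum>i=Suc (Suc j)..l. f i)"
  using sum.atLeastLessThan_concat[of 1 "Suc (Suc j)" "Suc l" f] assms
  by (simp add: atLeastLessThanSuc_atLeastAtMost)

lemma (in prob_space) v_noise_meas:
  assumes "\<And>i. i \<in> {1..k} \<Longrightarrow> X i \<in> borel_measurable M" "l \<le> k"
  shows "v_noise \<gamma> X l \<in> borel_measurable M"
proof -
  have "(\<lambda>\<omega>. \<Sum>i=1..l. sqrt (\<gamma> i) * X i \<omega>) \<in> borel_measurable M"
    by (rule borel_measurable_sum) (use assms in auto)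
  then show ?thesis unfolding v_noise_def[abs_def] by measurable
qed

lemma (in prob_space) event_meas:
  assumes "\<And>i. i \<in> {1..k} \<Longrightarrow> X i \<in> borel_measurable M" "L \<subseteq> {..k}" "finite L"
  shows "{\<omega>\<in>space M. \<forall>l\<in>L. c l < v_noise \<gamma> X l \<omega>} \<in> events"
proof -
  show ?thesis
  proof (rule sets.sets_Collect_finite_All[OF _ assms(3)])
    fix l assume "l \<in> L"
    then have [measurable]: "v_noise \<gamma> X l \<in> borel_measurable M" using assms by (intro v_noise_meas[of k]) auto
    show "{\<omega>\<in>space M. c l < v_noise \<gamma> X l \<omega>} \<in> events" by measurable
  qed
qed

lemma (in prob_space) step:
  fixes X :: "nat \<Rightarrow> 'a \<Rightarrow> real"
  assumes indep: "indep_vars (\<lambda>_. borel) X {1..k}"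
    and normal: "\<And>i. i \<in> {1..k} \<Longrightarrow> distributed M lborel (X i) (\<lambda>x. ennreal (std_normal_density x))"
    and g1: "\<gamma> 1 > 0" and g2: "\<And>i. i \<in> {2..k} \<Longrightarrow> \<gamma> i \<ge> 0"
    and j: "1 \<le> j" "j < k"
  shows "1/2 * prob {\<omega>\<in>space M. \<forall>l\<in>{Suc j..k}. 1/2 * sqrt (gamma_acc \<gamma> l) * d < v_noise \<gamma> X l \<omega>}
      \<le> prob {\<omega>\<in>space M. \<forall>l\<in>{j..k}. 1/2 * sqrt (gamma_acc \<gamma> l) * d < v_noise \<gamma> X l \<omega>}"
proof -
  define G where "G = gamma_acc \<gamma>"
  have Gpos: "G l > 0" if "1 \<le> l" "l \<le> k" for l
    unfolding G_def using gamma_acc_pos[of \<gamma> k l] g1 g2 that by blast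
  have Gj: "G j > 0" and G1: "G (Suc j) > 0" using Gpos j by auto
  have GS: "G (Suc j) = G j + \<gamma> (Suc j)" unfolding G_def by (rule gamma_acc_Suc)
  have gS: "\<gamma> (Suc j) \<ge> 0" using g2 j by auto
  define p where "p = sqrt (G j) / sqrt (G (Suc j))"
  define q where "q = sqrt (\<gamma> (Suc j)) / sqrt (G (Suc j))"
  have ppos: "p > 0" unfolding p_def using Gj G1 by simp
  have qnn: "q \<ge> 0" unfolding q_def using gS G1 by simp
  have pq: "p\<^sup>2 + q\<^sup>2 = 1"
  proof -
    have "p\<^sup>2 + q\<^sup>2 = G j / G (Suc j) + \<gamma> (Suc j) / G (Suc j)"
      unfolding p_def q_def using Gj G1 gS by (simp add: power_divide)
    also have "\<dots> = 1" using G1 by (simp add: GS add_divide_distrib[symmetric])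
    finally show ?thesis .
  qed
  define S where "S = (\<lambda>l \<omega>. \<Sum>i=1..l. sqrt (\<gamma> i) * X i \<omega>)"
  have vS: "v_noise \<gamma> X l \<omega> = 1 / sqrt (G l) * S l \<omega>" for l \<omega>
    unfolding v_noise_def S_def G_def ..
  have rvX[measurable]: "X i \<in> borel_measurable M" if "i \<in> {1..k}" for i
    using indep that unfolding indep_vars_def by auto
  define MY where "MY = PiM {1..Suc j} (\<lambda>_::nat. borel :: real measure)"
  define MZ where "MZ = PiM {Suc (Suc j)..k} (\<lambda>_::nat. borel :: real measure)"
  define Y where "Y = (\<lambda>\<omega>. restrict (\<lambda>i. X i \<omega>) {1..Suc j})"
  define Z where "Z = (\<lambda>\<omega>. restrict (\<lambda>i. X i \<omega>) {Suc (Suc j)..k})"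
  define fW where "fW = (\<lambda>y::nat\<Rightarrow>real. (\<Sum>i=1..j. sqrt (\<gamma> i) * y i) / sqrt (G j))"
  define fV where "fV = (\<lambda>y::nat\<Rightarrow>real. y (Suc j))"
  define W where "W = (\<lambda>\<omega>. (\<Sum>i=1..j. sqrt (\<gamma> i) * X i \<omega>) / sqrt (G j))"
  define V where "V = X (Suc j)"
  have fWm: "fW \<in> borel_measurable MY" unfolding fW_def MY_def
    by (intro borel_measurable_divide borel_measurable_sum borel_measurable_times borel_measurable_const)
       (auto intro!: measurable_component_singleton)
  have fVm: "fV \<in> borel_measurable MY" unfolding fV_def MY_def
    by (rule measurable_component_singleton) auto
  have Wdef: "W = (\<lambda>\<omega>. fW (Y \<omega>))" unfolding W_def fW_def Y_def
    by (auto intro!: sum.cong)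
  have Vdef: "V = (\<lambda>\<omega>. fV (Y \<omega>))" unfolding V_def fV_def Y_def by auto
  have dW: "distributed M lborel W (\<lambda>x. ennreal (std_normal_density x))"
    unfolding W_def G_def using W_normal[OF indep normal, of j \<gamma>] g1 g2 j by simp
  have dV: "distributed M lborel V (\<lambda>x. ennreal (std_normal_density x))"
    unfolding V_def by (rule normal) (use j in auto)
  have iZ: "indep_var MY Y MZ Z"
    unfolding MY_def MZ_def Y_def Z_def by (rule indep_var_restrict[OF indep]) (use j in auto)
  have iWV: "indep_var lborel W lborel V"
  proof -
    have i0: "indep_var (PiM {1..j} (\<lambda>_. borel)) (\<lambda>\<omega>. restrict (\<lambda>i. X i \<omega>) {1..j})
                        (PiM {Suc j} (\<lambda>_. borel)) (\<lambda>\<omega>. restrict (\<lambda>i. X i \<omega>) {Suc j})"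
      by (rule indep_var_restrict[OF indep]) (use j in auto)
    have m1: "(\<lambda>y::nat\<Rightarrow>real. (\<Sum>i=1..j. sqrt (\<gamma> i) * y i) / sqrt (G j)) \<in> measurable (PiM {1..j} (\<lambda>_. borel)) lborel"
      unfolding measurable_lborel1 by (intro borel_measurable_divide borel_measurable_sum borel_measurable_times borel_measurable_const)
         (auto intro!: measurable_component_singleton)
    have m2: "(\<lambda>y::nat\<Rightarrow>real. y (Suc j)) \<in> measurable (PiM {Suc j} (\<lambda>_. borel)) lborel"
      unfolding measurable_lborel1 by (rule measurable_component_singleton) auto
    have "indep_var lborel ((\<lambda>y::nat\<Rightarrow>real. (\<Sum>i=1..j. sqrt (\<gamma> i) * y i) / sqrt (G j)) \<circ> (\<lambda>\<omega>. restrict (\<lambda>i. X i \<omega>) {1..j}))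
                    lborel ((\<lambda>y::nat\<Rightarrow>real. y (Suc j)) \<circ> (\<lambda>\<omega>. restrict (\<lambda>i. X i \<omega>) {Suc j}))"
      by (rule indep_var_compose[OF i0 m1 m2])
    moreover have "(\<lambda>y::nat\<Rightarrow>real. (\<Sum>i=1..j. sqrt (\<gamma> i) * y i) / sqrt (G j)) \<circ> (\<lambda>\<omega>. restrict (\<lambda>i. X i \<omega>) {1..j}) = W"
      unfolding W_def by (auto intro!: sum.cong)
    moreover have "(\<lambda>y::nat\<Rightarrow>real. y (Suc j)) \<circ> (\<lambda>\<omega>. restrict (\<lambda>i. X i \<omega>) {Suc j}) = V"
      unfolding V_def by auto
    ultimately show ?thesis by simp
  qed
  define T where "T = (\<lambda>l (z::nat\<Rightarrow>real). \<Sum>i=Suc (Suc j)..l. sqrt (\<gamma> i) * z i)"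
  define Gs where "Gs = {x \<in> space (lborel \<Otimes>\<^sub>M MZ). \<forall>l\<in>{Suc j..k}.
       1/2 * sqrt (G l) * d < 1 / sqrt (G l) * (sqrt (G (Suc j)) * fst x + T l (snd x))}"
  have Gsm: "Gs \<in> sets (lborel \<Otimes>\<^sub>M MZ)"
    unfolding Gs_def
  proof (rule sets.sets_Collect_finite_All)
    fix l assume l: "l \<in> {Suc j..k}"
    have [measurable]: "T l \<in> borel_measurable MZ" unfolding T_def MZ_def
      by (intro borel_measurable_sum borel_measurable_times borel_measurable_const)
         (use l in \<open>auto intro!: measurable_component_singleton\<close>)
    show "{x \<in> space (lborel \<Otimes>\<^sub>M MZ). 1/2 * sqrt (G l) * d < 1 / sqrt (G l) * (sqrt (G (Suc j)) * fst x + T l (snd x))}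
       \<in> sets (lborel \<Otimes>\<^sub>M MZ)" by measurable
  qed simp
  have main: "1/2 * prob {\<omega>\<in>space M. (p * W \<omega> + q * V \<omega>, Z \<omega>) \<in> Gs}
    \<le> prob {\<omega>\<in>space M. q * W \<omega> - p * V \<omega> \<ge> 0 \<and> (p * W \<omega> + q * V \<omega>, Z \<omega>) \<in> Gs}"
    by (rule reflect_half[OF fWm fVm Wdef Vdef dW dV iWV iZ _ pq Gsm]) (use ppos in simp)
  have Zsp: "Z \<omega> \<in> space MZ" if "\<omega> \<in> space M" for \<omega>
    using that unfolding Z_def MZ_def by (auto simp: space_PiM)
  have key: "sqrt (G (Suc j)) * (p * W \<omega> + q * V \<omega>) + T l (Z \<omega>) = S l \<omega>" if "l \<in> {Suc j..k}" for l \<omega>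
  proof -
    have "sqrt (G (Suc j)) * (p * W \<omega> + q * V \<omega>) = S (Suc j) \<omega>"
      unfolding p_def q_def W_def V_def S_def using Gj G1 by (simp add: field_simps)
    moreover have "T l (Z \<omega>) = (\<Sum>i=Suc (Suc j)..l. sqrt (\<gamma> i) * X i \<omega>)"
      unfolding T_def Z_def using that by (auto intro!: sum.cong)
    ultimately show ?thesis unfolding S_def using sum_split_Suc[of j l] that by simp
  qed
  have A1: "{\<omega>\<in>space M. (p * W \<omega> + q * V \<omega>, Z \<omega>) \<in> Gs}
      = {\<omega>\<in>space M. \<forall>l\<in>{Suc j..k}. 1/2 * sqrt (gamma_acc \<gamma> l) * d < v_noise \<gamma> X l \<omega>}"
  proof -
    have eq: "(p * W \<omega> + q * V \<omega>, Z \<omega>) \<in> Gs \<longleftrightarrow> (\<forall>l\<in>{Suc j..k}. 1/2 * sqrt (G l) * d < v_noise \<gamma> X l \<omega>)"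
      if "\<omega> \<in> space M" for \<omega>
    proof -
      have "(p * W \<omega> + q * V \<omega>, Z \<omega>) \<in> Gs \<longleftrightarrow> (\<forall>l\<in>{Suc j..k}. 1/2 * sqrt (G l) * d < 1 / sqrt (G l) * (sqrt (G (Suc j)) * (p * W \<omega> + q * V \<omega>) + T l (Z \<omega>)))"
        unfolding Gs_def using Zsp[OF that] by (simp add: space_pair_measure)
      also have "\<dots> \<longleftrightarrow> (\<forall>l\<in>{Suc j..k}. 1/2 * sqrt (G l) * d < v_noise \<gamma> X l \<omega>)"
        unfolding vS by (intro ball_cong refl) (simp only: key)
      finally show ?thesis .
    qed
    show ?thesis using eq unfolding G_def by auto
  qed
  have A2: "{\<omega>\<in>space M. q * W \<omega> - p * V \<omega> \<ge> 0 \<and> (p * W \<omega> + q * V \<omega>, Z \<omega>) \<in> Gs}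
      \<subseteq> {\<omega>\<in>space M. \<forall>l\<in>{j..k}. 1/2 * sqrt (gamma_acc \<gamma> l) * d < v_noise \<gamma> X l \<omega>}"
  proof safe
    fix \<omega> l assume \<omega>: "\<omega> \<in> space M" and qp: "q * W \<omega> - p * V \<omega> \<ge> 0"
      and inG: "(p * W \<omega> + q * V \<omega>, Z \<omega>) \<in> Gs" and l: "l \<in> {j..k}"
    have all: "\<forall>l\<in>{Suc j..k}. 1/2 * sqrt (gamma_acc \<gamma> l) * d < v_noise \<gamma> X l \<omega>"
      using A1 \<omega> inG by blast
    show "1/2 * sqrt (gamma_acc \<gamma> l) * d < v_noise \<gamma> X l \<omega>"
    proof (cases "l = j")
      case False then show ?thesis using all l by auto
    next
      case True
      have "1/2 * sqrt (G (Suc j)) * d < 1 / sqrt (G (Suc j)) * (sqrt (G (Suc j)) * fst (p * W \<omega> + q * V \<omega>, Z \<omega>) + T (Suc j) (snd (p * W \<omega> + q * V \<omega>, Z \<omega>)))"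
        using inG j unfolding Gs_def by auto
      then have "1/2 * sqrt (G (Suc j)) * d < p * W \<omega> + q * V \<omega>"
        using G1 by (simp add: T_def)
      then have "p * (1/2 * sqrt (G (Suc j)) * d) < W \<omega>"
        by (rule alg_step[OF ppos qnn pq qp])
      moreover have "p * (1/2 * sqrt (G (Suc j)) * d) = 1/2 * sqrt (G j) * d"
        unfolding p_def using G1 by simp
      moreover have "v_noise \<gamma> X j \<omega> = W \<omega>"
        unfolding vS W_def S_def by simp
      ultimately have "1/2 * sqrt (G j) * d < v_noise \<gamma> X j \<omega>" by linarith
      then show ?thesis using True by (simp only: G_def)
    qed
  qed
  have "prob {\<omega>\<in>space M. q * W \<omega> - p * V \<omega> \<ge> 0 \<and> (p * W \<omega> + q * V \<omega>, Z \<omega>) \<in> Gs}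
      \<le> prob {\<omega>\<in>space M. \<forall>l\<in>{j..k}. 1/2 * sqrt (gamma_acc \<gamma> l) * d < v_noise \<gamma> X l \<omega>}"
    by (rule finite_measure_mono[OF A2 event_meas[of k X]]) (use rvX in auto)
  then show ?thesis using main A1 by simp
qed

theorem proposition2:
  fixes M :: "'a measure" and X :: "nat \<Rightarrow> 'a \<Rightarrow> real"
    and \<gamma> :: "nat \<Rightarrow> real" and k :: nat and d :: real
  assumes "prob_space M"
    and "prob_space.indep_vars M (\<lambda>_. borel) X {1..k}"
    and "\<And>i. i \<in> {1..k} \<Longrightarrow> distributed M lborel (X i) std_normal_density"
    and "k \<ge> 1" and "d > 0"
    and "\<gamma> 1 > 0" and "\<And>i. i \<in> {2..k} \<Longrightarrow> \<gamma> i \<ge> 0"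
  shows "1 / 2 ^ (k - 1) * P_k M \<gamma> X k d \<le> P_1k M \<gamma> X k d
         \<and> P_1k M \<gamma> X k d \<le> P_k M \<gamma> X k d"
proof -
  interpret prob_space M by fact
  note indep = assms(2) and normal = assms(3) and k = assms(4) and g1 = assms(6) and g2 = assms(7)
  have rvX: "X i \<in> borel_measurable M" if "i \<in> {1..k}" for i
    using indep that unfolding indep_vars_def by auto
  define E where "E = (\<lambda>L. {\<omega>\<in>space M. \<forall>l\<in>L. 1/2 * sqrt (gamma_acc \<gamma> l) * d < v_noise \<gamma> X l \<omega>})"
  have P1k: "P_1k M \<gamma> X k d = prob (E {1..k})" unfolding P_1k_def E_def ..
  have Pk: "P_k M \<gamma> X k d = prob (E {k..k})" unfolding P_k_def E_def by simp
  have up: "P_1k M \<gamma> X k d \<le> P_k M \<gamma> X k d"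
    unfolding P1k Pk E_def
    by (rule finite_measure_mono[OF _ event_meas[of k X]]) (use rvX k in \<open>auto simp: E_def\<close>)
  have claim: "m \<le> k - 1 \<Longrightarrow> (1/2)^m * prob (E {k..k}) \<le> prob (E {k-m..k})" for m
  proof (induction m)
    case 0 then show ?case by simp
  next
    case (Suc m)
    define j where "j = k - Suc m"
    have j: "1 \<le> j" "j < k" using Suc.prems k unfolding j_def by auto
    have sj: "Suc j = k - m" using Suc.prems k unfolding j_def by auto
    have "(1/2)^Suc m * prob (E {k..k}) = 1/2 * ((1/2)^m * prob (E {k..k}))" by simp
    also have "\<dots> \<le> 1/2 * prob (E {k-m..k})" using Suc by simp
    also have "\<dots> \<le> prob (E {j..k})"
      using step[where X=X and k=k and \<gamma>=\<gamma> and j=j and d=d, OF indep normal g1 g2 j] unfolding E_def sj .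
    finally show ?case unfolding j_def .
  qed
  have "(1/2)^(k-1) * prob (E {k..k}) \<le> prob (E {k-(k-1)..k})" by (rule claim) simp
  moreover have "k - (k - 1) = 1" using k by simp
  ultimately have "1 / 2 ^ (k - 1) * P_k M \<gamma> X k d \<le> P_1k M \<gamma> X k d"
    unfolding P1k Pk by (simp add: power_one_over)
  with up show ?thesis by simp
qed

end
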